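(* Let $(A,\mathcal H)$ be a commutative Hopf algebroid and $(A,\mathcal K)$ a sub-Hopf algebroid, with inclusion $\phi:\mathcal K\to\mathcal H$ and projection $\pi:\mathcal H\to\mathcal H/\mathcal H\mathcal K^+$. For every commutative $\Bbbk$-algebra $R$, the kernel of the restriction map $\Phi_R:\mathrm{CAlg}_\Bbbk(\mathcal H,R)\to\mathrm{CAlg}_\Bbbk(\mathcal K,R)$, $f\mapsto f\circ\phi$, namely $\{f: f\circ\phi=x\circ\varepsilon|_{\mathcal K}\text{ for some }x\in\mathrm{CAlg}_\Bbbk(A,R)\}$, equals $\{h\circ\pi:h\in\mathrm{CAlg}_\Bbbk(\mathcal H/\mathcal H\mathcal K^+,R)\}$; equivalently, the map $\mathscr G_{\mathcal H}(R)/\mathscr G_{\mathcal H/\mathcal H\mathcal K^+}(R)\to\mathscr G_{\mathcal K}(R)$, $\mathscr G_{\mathcal H/\mathcal H\mathcal K^+}(R)\bullet g\mapsto g\circ\phi$, is injective.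
   Context: A commutative Hopf algebroid $(A,\mathcal H)$ over a field $\Bbbk$: commutative $\Bbbk$-algebras $A,\mathcal H$ with algebra maps $s,t:A\to\mathcal H$, $\varepsilon:\mathcal H\to A$, $\Delta:\mathcal H\to\mathcal H\otimes_A\mathcal H$ (left factor an $A$-module via $t$, right via $s$), $\mathcal S$ such that $(\mathcal H,\Delta,\varepsilon)$ is a coassociative counital $A$-coring, $\mathcal Ss=t$, $\mathcal St=s$, $\mathcal S^2=\mathrm{id}$, $\sum\mathcal S(u_1)u_2=t\varepsilon(u)$, $\sum u_1\mathcal S(u_2)=s\varepsilon(u)$ ($\Delta(u)=\sum u_1\otimes_Au_2$). A sub-Hopf algebroid $\mathcal K$: subalgebra containing $s(A),t(A)$, stable under $\mathcal S$, with $\Delta(\mathcal K)\subseteq\mathcal K\otimes_A\mathcal K$; $\mathcal K^+=\mathcal K\cap\ker\varepsilon$. $\mathscr G_{\mathcal H}(R)=\mathrm{CAlg}_\Bbbk(\mathcal H,R)$ is a groupoid with objects $\mathrm{CAlg}_\Bbbk(A,R)$, source $\varphi\mapsto\varphi s$, target $\varphi\mapsto\varphi t$, composition $(\psi\bullet\varphi)(h)=\sum\varphi(h_1)\psi(h_2)$ (similarly $\mathscr G_{\mathcal K}(R)$). $\mathscr G_{\mathcal H/\mathcal H\mathcal K^+}(R)=\mathrm{CAlg}_\Bbbk(\mathcal H/\mathcal H\mathcal K^+,R)$ embeds via $h\mapsto h\pi$, and $\mathscr G_{\mathcal H}(R)/\mathscr G_{\mathcal H/\mathcal H\mathcal K^+}(R)$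 denotes the set of orbits $\{(h\circ\pi)\bullet g\}$ of the left action by composition. *)

theory Defs
  imports "HOL-Library.Poly_Mapping" "HOL-Algebra.QuotRing"
begin

definition kalg :: "('k::field \<Rightarrow> 'a::comm_ring_1) \<Rightarrow> bool" where
  "kalg \<iota> \<longleftrightarrow> \<iota> 1 = 1 \<and> (\<forall>x y. \<iota> (x + y) = \<iota> x + \<iota> y) \<and> (\<forall>x y. \<iota> (x * y) = \<iota> x * \<iota> y)"

definition calg :: "('k::field \<Rightarrow> 'a::comm_ring_1) \<Rightarrow> ('k \<Rightarrow> 'b::comm_ring_1) \<Rightarrow> ('a \<Rightarrow> 'b) \<Rightarrow> bool" where
  "calg \<iota>a \<iota>b f \<longleftrightarrow> f 1 = 1 \<and> (\<forall>x y. f (x + y) = f x + f y) \<and> (\<forall>x y. f (x * y) = f x * f y)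
     \<and> (\<forall>c. f (\<iota>a c) = \<iota>b c)"

text \<open>Elements are represented by formal Z-linear combinations of pure tensors;
  the tensor product is the quotient by the subgroup generated by biadditivity
  and A-balancedness relations (left factor an A-module via t, right via s).\<close>

inductive_set tz2 :: "('a \<Rightarrow> 'h::comm_ring_1) \<Rightarrow> ('a \<Rightarrow> 'h) \<Rightarrow> ('h \<times> 'h \<Rightarrow>\<^sub>0 int) set"
  for s t where
  tz2_zero: "0 \<in> tz2 s t"
| tz2_add1: "Poly_Mapping.single (u + u', v) 1 - Poly_Mapping.single (u, v) 1
             - Poly_Mapping.single (u', v) 1 \<in> tz2 s t"
| tz2_add2: "Poly_Mapping.single (u, v + v') 1 - Poly_Mapping.single (u, v) 1
             - Poly_Mapping.single (u, v') 1 \<in> tz2 s t"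
| tz2_bal: "Poly_Mapping.single (u * t a, v) 1 - Poly_Mapping.single (u, s a * v) 1 \<in> tz2 s t"
| tz2_diff: "X \<in> tz2 s t \<Longrightarrow> Y \<in> tz2 s t \<Longrightarrow> X - Y \<in> tz2 s t"

inductive_set tz3 :: "('a \<Rightarrow> 'h::comm_ring_1) \<Rightarrow> ('a \<Rightarrow> 'h) \<Rightarrow> ('h \<times> 'h \<times> 'h \<Rightarrow>\<^sub>0 int) set"
  for s t where
  tz3_zero: "0 \<in> tz3 s t"
| tz3_add1: "Poly_Mapping.single (u + u', v, w) 1 - Poly_Mapping.single (u, v, w) 1
             - Poly_Mapping.single (u', v, w) 1 \<in> tz3 s t"
| tz3_add2: "Poly_Mapping.single (u, v + v', w) 1 - Poly_Mapping.single (u, v, w) 1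
             - Poly_Mapping.single (u, v', w) 1 \<in> tz3 s t"
| tz3_add3: "Poly_Mapping.single (u, v, w + w') 1 - Poly_Mapping.single (u, v, w) 1
             - Poly_Mapping.single (u, v, w') 1 \<in> tz3 s t"
| tz3_bal1: "Poly_Mapping.single (u * t a, v, w) 1 - Poly_Mapping.single (u, s a * v, w) 1 \<in> tz3 s t"
| tz3_bal2: "Poly_Mapping.single (u, v * t a, w) 1 - Poly_Mapping.single (u, v, s a * w) 1 \<in> tz3 s t"
| tz3_diff: "X \<in> tz3 s t \<Longrightarrow> Y \<in> tz3 s t \<Longrightarrow> X - Y \<in> tz3 s t"

definition teq2 :: "('a \<Rightarrow> 'h::comm_ring_1) \<Rightarrow> ('a \<Rightarrow> 'h) \<Rightarrow> ('h \<times> 'h \<Rightarrow>\<^sub>0 int) \<Rightarrow> ('h \<times> 'h \<Rightarrow>\<^sub>0 int) \<Rightarrow> bool" where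
  "teq2 s t X Y \<longleftrightarrow> X - Y \<in> tz2 s t"

definition tpure :: "'h \<Rightarrow> 'h \<Rightarrow> ('h \<times> 'h \<Rightarrow>\<^sub>0 int)" where
  "tpure u v = Poly_Mapping.single (u, v) 1"

definition tmul2 :: "('h::comm_ring_1 \<times> 'h \<Rightarrow>\<^sub>0 int) \<Rightarrow> ('h \<times> 'h \<Rightarrow>\<^sub>0 int) \<Rightarrow> ('h \<times> 'h \<Rightarrow>\<^sub>0 int)" where
  "tmul2 X Y = (\<Sum>p\<in>Poly_Mapping.keys X. \<Sum>q\<in>Poly_Mapping.keys Y.
      Poly_Mapping.single (fst p * fst q, snd p * snd q) (Poly_Mapping.lookup X p * Poly_Mapping.lookup Y q))"

definition lact2 :: "'h::comm_ring_1 \<Rightarrow> ('h \<times> 'h \<Rightarrow>\<^sub>0 int) \<Rightarrow> ('h \<times> 'h \<Rightarrow>\<^sub>0 int)" where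
  "lact2 h X = (\<Sum>p\<in>Poly_Mapping.keys X. Poly_Mapping.single (h * fst p, snd p) (Poly_Mapping.lookup X p))"

definition ract2 :: "('h::comm_ring_1 \<times> 'h \<Rightarrow>\<^sub>0 int) \<Rightarrow> 'h \<Rightarrow> ('h \<times> 'h \<Rightarrow>\<^sub>0 int)" where
  "ract2 X h = (\<Sum>p\<in>Poly_Mapping.keys X. Poly_Mapping.single (fst p, snd p * h) (Poly_Mapping.lookup X p))"

definition delta_left :: "('h \<Rightarrow> ('h \<times> 'h \<Rightarrow>\<^sub>0 int)) \<Rightarrow> ('h \<times> 'h \<Rightarrow>\<^sub>0 int) \<Rightarrow> ('h \<times> 'h \<times> 'h \<Rightarrow>\<^sub>0 int)" where
  "delta_left D X = (\<Sum>p\<in>Poly_Mapping.keys X. \<Sum>q\<in>Poly_Mapping.keys (D (fst p)).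
      Poly_Mapping.single (fst q, snd q, snd p) (Poly_Mapping.lookup X p * Poly_Mapping.lookup (D (fst p)) q))"

definition delta_right :: "('h \<Rightarrow> ('h \<times> 'h \<Rightarrow>\<^sub>0 int)) \<Rightarrow> ('h \<times> 'h \<Rightarrow>\<^sub>0 int) \<Rightarrow> ('h \<times> 'h \<times> 'h \<Rightarrow>\<^sub>0 int)" where
  "delta_right D X = (\<Sum>p\<in>Poly_Mapping.keys X. \<Sum>q\<in>Poly_Mapping.keys (D (snd p)).
      Poly_Mapping.single (fst p, fst q, snd q) (Poly_Mapping.lookup X p * Poly_Mapping.lookup (D (snd p)) q))"

text \<open>Sum \<Sum> \<beta>(u_1,u_2) over a representative \<Sum> u_1 \<otimes> u_2 (used only for balanced biadditive \<beta>).\<close>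
definition tsum :: "('h \<times> 'h \<Rightarrow>\<^sub>0 int) \<Rightarrow> ('h \<Rightarrow> 'h \<Rightarrow> 'r::comm_ring_1) \<Rightarrow> 'r" where
  "tsum X \<beta> = (\<Sum>p\<in>Poly_Mapping.keys X. of_int (Poly_Mapping.lookup X p) * \<beta> (fst p) (snd p))"

text \<open>D u is a representative of \<Delta>(u) \<in> H \<otimes>_A H.\<close>
definition hopf_algebroid ::
  "('k::field \<Rightarrow> 'a::comm_ring_1) \<Rightarrow> ('k \<Rightarrow> 'h::comm_ring_1) \<Rightarrow> ('a \<Rightarrow> 'h) \<Rightarrow> ('a \<Rightarrow> 'h)
   \<Rightarrow> ('h \<Rightarrow> 'a) \<Rightarrow> ('h \<Rightarrow> ('h \<times> 'h \<Rightarrow>\<^sub>0 int)) \<Rightarrow> ('h \<Rightarrow> 'h) \<Rightarrow> bool" where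
  "hopf_algebroid \<iota>A \<iota>H s t \<epsilon> D S \<longleftrightarrow>
     kalg \<iota>A \<and> kalg \<iota>H \<and> calg \<iota>A \<iota>H s \<and> calg \<iota>A \<iota>H t \<and> calg \<iota>H \<iota>A \<epsilon> \<and> calg \<iota>H \<iota>H S \<and>
     \<comment> \<open>\<Delta> is a k-algebra map into H \<otimes>_A H\<close>
     teq2 s t (D 1) (tpure 1 1) \<and>
     (\<forall>u v. teq2 s t (D (u + v)) (D u + D v)) \<and>
     (\<forall>u v. teq2 s t (D (u * v)) (tmul2 (D u) (D v))) \<and>
     (\<forall>c. teq2 s t (D (\<iota>H c)) (tpure (\<iota>H c) 1)) \<and>
     \<comment> \<open>\<Delta> is an A-bimodule map (coring)\<close>
     (\<forall>a u. teq2 s t (D (s a * u)) (lact2 (s a) (D u))) \<and>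
     (\<forall>a u. teq2 s t (D (u * t a)) (ract2 (D u) (t a))) \<and>
     \<comment> \<open>coassociativity\<close>
     (\<forall>u. delta_left D (D u) - delta_right D (D u) \<in> tz3 s t) \<and>
     \<comment> \<open>\<epsilon> is an A-bimodule map and counitality\<close>
     (\<forall>a u. \<epsilon> (s a * u) = a * \<epsilon> u) \<and> (\<forall>a u. \<epsilon> (u * t a) = \<epsilon> u * a) \<and>
     (\<forall>u. tsum (D u) (\<lambda>x y. s (\<epsilon> x) * y) = u) \<and>
     (\<forall>u. tsum (D u) (\<lambda>x y. x * t (\<epsilon> y)) = u) \<and>
     \<comment> \<open>antipode\<close>
     S \<circ> s = t \<and> S \<circ> t = s \<and> (\<forall>u. S (S u) = u) \<and>
     (\<forall>u. tsum (D u) (\<lambda>x y. S x * y) = t (\<epsilon> u)) \<and>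
     (\<forall>u. tsum (D u) (\<lambda>x y. x * S y) = s (\<epsilon> u))"

definition sub_hopf_algebroid ::
  "('k::field \<Rightarrow> 'h::comm_ring_1) \<Rightarrow> ('a \<Rightarrow> 'h) \<Rightarrow> ('a \<Rightarrow> 'h)
   \<Rightarrow> ('h \<Rightarrow> ('h \<times> 'h \<Rightarrow>\<^sub>0 int)) \<Rightarrow> ('h \<Rightarrow> 'h) \<Rightarrow> 'h set \<Rightarrow> bool" where
  "sub_hopf_algebroid \<iota>H s t D S K \<longleftrightarrow>
     1 \<in> K \<and> (\<forall>x\<in>K. \<forall>y\<in>K. x + y \<in> K \<and> x * y \<in> K) \<and> (\<forall>c. \<forall>x\<in>K. \<iota>H c * x \<in> K) \<and>
     range s \<subseteq> K \<and> range t \<subseteq> K \<and> S ` K \<subseteq> K \<and>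
     (\<forall>u\<in>K. \<exists>X. teq2 s t (D u) X \<and> Poly_Mapping.keys X \<subseteq> K \<times> K)"

definition type_ring :: "('a::comm_ring_1) ring" where
  "type_ring = \<lparr>carrier = UNIV, monoid.mult = (*), one = 1, zero = 0, add = (+)\<rparr>"

definition Kplus :: "('h \<Rightarrow> 'a::zero) \<Rightarrow> 'h set \<Rightarrow> 'h set" where
  "Kplus \<epsilon> K = K \<inter> {u. \<epsilon> u = 0}"

definition HKplus :: "('h \<Rightarrow> 'a::zero) \<Rightarrow> 'h::comm_ring_1 set \<Rightarrow> 'h set" where
  "HKplus \<epsilon> K = genideal (type_ring :: 'h ring) (Kplus \<epsilon> K)"

definition qproj :: "('h \<Rightarrow> 'a::zero) \<Rightarrow> 'h::comm_ring_1 set \<Rightarrow> 'h \<Rightarrow> 'h set" where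
  "qproj \<epsilon> K x = HKplus \<epsilon> K +>\<^bsub>(type_ring :: 'h ring)\<^esub> x"

definition qcalg :: "('k::field \<Rightarrow> 'h::comm_ring_1) \<Rightarrow> ('k \<Rightarrow> 'r::comm_ring_1)
    \<Rightarrow> ('h \<Rightarrow> 'a::zero) \<Rightarrow> 'h set \<Rightarrow> ('h set \<Rightarrow> 'r) \<Rightarrow> bool" where
  "qcalg \<iota>H \<iota>R \<epsilon> K h \<longleftrightarrow>
     h \<in> ring_hom ((type_ring :: 'h ring) Quot HKplus \<epsilon> K) (type_ring :: 'r ring) \<and>
     (\<forall>c. h (qproj \<epsilon> K (\<iota>H c)) = \<iota>R c)"

definition gcomp :: "('h \<Rightarrow> ('h \<times> 'h \<Rightarrow>\<^sub>0 int)) \<Rightarrow> ('h \<Rightarrow> 'r::comm_ring_1) \<Rightarrow> ('h \<Rightarrow> 'r) \<Rightarrow> ('h \<Rightarrow> 'r)" where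
  "gcomp D \<psi> \<phi> = (\<lambda>u. tsum (D u) (\<lambda>x y. \<phi> x * \<psi> y))"

text \<open>The orbit G_{H/HK^+}(R) \<bullet> g of g under the left action by composition
  (only composable pairs: target of g = source of h \<circ> \<pi>).\<close>
definition orbit ::
  "('k::field \<Rightarrow> 'h::comm_ring_1) \<Rightarrow> ('k \<Rightarrow> 'r::comm_ring_1) \<Rightarrow> ('a::zero \<Rightarrow> 'h) \<Rightarrow> ('a \<Rightarrow> 'h)
   \<Rightarrow> ('h \<Rightarrow> 'a) \<Rightarrow> ('h \<Rightarrow> ('h \<times> 'h \<Rightarrow>\<^sub>0 int)) \<Rightarrow> 'h set \<Rightarrow> ('h \<Rightarrow> 'r) \<Rightarrow> ('h \<Rightarrow> 'r) set" where
  "orbit \<iota>H \<iota>R s t \<epsilon> D K g =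
     {gcomp D (h \<circ> qproj \<epsilon> K) g | h. qcalg \<iota>H \<iota>R \<epsilon> K h \<and> h \<circ> qproj \<epsilon> K \<circ> s = g \<circ> t}"

end

theory Submission
  imports Defs
begin


lemma type_ring_simps[simp]: "carrier (type_ring::'a::comm_ring_1 ring) = UNIV"
  "mult type_ring = ((*)::'a\<Rightarrow>_)" "one (type_ring::'a ring) = 1"
  "zero (type_ring::'a ring) = 0" "add type_ring = ((+)::'a\<Rightarrow>_)"
  by (simp_all add: type_ring_def)

lemma cring_type_ring: "cring (type_ring :: 'a::comm_ring_1 ring)"
proof (rule cringI)
  show "abelian_group (type_ring :: 'a::comm_ring_1 ring)"
    by (rule abelian_groupI) (auto simp: algebra_simps intro: exI[of _ "- x" for x])
  show "comm_monoid (type_ring :: 'a::comm_ring_1 ring)"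
    by (rule comm_monoidI) (auto simp: algebra_simps)
qed (auto simp: algebra_simps)

lemma type_ring_minus[simp]: "a_minus (type_ring :: 'a::comm_ring_1 ring) x y = x - y"
proof -
  interpret cring "type_ring :: 'a ring" by (rule cring_type_ring)
  have "x \<ominus>\<^bsub>type_ring\<^esub> y = x + (\<ominus>\<^bsub>type_ring\<^esub> y)" by (simp add: a_minus_def)
  moreover have "\<ominus>\<^bsub>type_ring\<^esub> y = - y"
    by (rule minus_equality) auto
  ultimately show ?thesis by simp
qed

lemma calg_basic:
  assumes "calg ia ib f"
  shows "f 0 = 0" "f (- x) = - f x" "f (x - y) = f x - f y" "f 1 = 1"
    "f (x + y) = f x + f y" "f (x * y) = f x * f y" "f (ia c) = ib c"
proof -
  have a: "\<And>x y. f (x + y) = f x + f y" using assms by (simp add: calg_def)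
  show z: "f 0 = 0" using a[of 0 0] by simp
  have n: "f (- x) = - f x" for x proof -
    have "f x + f (- x) = 0" using a[of x "-x"] z by simp
    then show ?thesis by (metis add.inverse_unique)
  qed
  show "f (- x) = - f x" by (rule n)
  show "f (x - y) = f x - f y" using a[of x "-y"] n[of y] by simp
  show "f 1 = 1" "f (x + y) = f x + f y" "f (x * y) = f x * f y" "f (ia c) = ib c"
    using assms by (simp_all add: calg_def)
qed

lemma calg_of_int: assumes "calg ia ib f" shows "f (of_int n) = of_int n"
proof -
  have "f (of_nat m) = of_nat m" for m
    by (induction m) (simp_all add: calg_basic[OF assms])
  then show ?thesis
    by (cases n rule: int_cases) (simp_all add: calg_basic[OF assms])
qed

lemma calg_sum: assumes "calg ia ib f" shows "f (sum g A) = (\<Sum>a\<in>A. f (g a))"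
  by (induction A rule: infinite_finite_induct) (simp_all add: calg_basic[OF assms])

lemma calg_comp: "calg ia ib f \<Longrightarrow> calg ib ic g \<Longrightarrow> calg ia ic (g \<circ> f)"
  by (simp add: calg_def)

lemma calg_ring_hom: assumes "calg ia ib f"
  shows "f \<in> ring_hom (type_ring :: 'a::comm_ring_1 ring) (type_ring :: 'b::comm_ring_1 ring)"
  using assms by (auto intro!: ring_hom_memI simp: calg_basic)



definition lin :: "('p \<Rightarrow>\<^sub>0 int) \<Rightarrow> ('p \<Rightarrow> 'r::comm_ring_1) \<Rightarrow> 'r" where
  "lin X \<beta> = (\<Sum>p\<in>Poly_Mapping.keys X. of_int (Poly_Mapping.lookup X p) * \<beta> p)"

lemma lin_superset: assumes "finite A" "Poly_Mapping.keys X \<subseteq> A"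
  shows "lin X \<beta> = (\<Sum>p\<in>A. of_int (Poly_Mapping.lookup X p) * \<beta> p)"
  unfolding lin_def
  by (rule sum.mono_neutral_left) (use assms in \<open>auto simp: in_keys_iff\<close>)

lemma lin_add: "lin (X + Y) \<beta> = lin X \<beta> + lin Y \<beta>"
proof -
  let ?A = "Poly_Mapping.keys X \<union> Poly_Mapping.keys Y"
  have "lin (X + Y) \<beta> = (\<Sum>p\<in>?A. of_int (Poly_Mapping.lookup (X+Y) p) * \<beta> p)"
    by (rule lin_superset) (auto dest: subsetD[OF keys_add])
  also have "\<dots> = (\<Sum>p\<in>?A. of_int (Poly_Mapping.lookup X p) * \<beta> p)
      + (\<Sum>p\<in>?A. of_int (Poly_Mapping.lookup Y p) * \<beta> p)"
    by (simp add: lookup_add distrib_right sum.distrib)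
  also have "\<dots> = lin X \<beta> + lin Y \<beta>"
    by (simp add: lin_superset[symmetric])
  finally show ?thesis .
qed

lemma lin_zero[simp]: "lin 0 \<beta> = 0" by (simp add: lin_def)

lemma lin_uminus: "lin (- X) \<beta> = - lin X \<beta>"
  using lin_add[of X "- X" \<beta>] by (metis add.inverse_unique add.right_inverse lin_zero)

lemma lin_diff: "lin (X - Y) \<beta> = lin X \<beta> - lin Y \<beta>"
  using lin_add[of X "- Y" \<beta>] lin_uminus[of Y \<beta>] by simp

lemma lin_single[simp]: "lin (Poly_Mapping.single p n) \<beta> = of_int n * \<beta> p"
  by (cases "n = 0") (simp_all add: lin_def)

lemma lin_sum: "lin (sum F A) \<beta> = (\<Sum>a\<in>A. lin (F a) \<beta>)"
  by (induction A rule: infinite_finite_induct) (simp_all add: lin_add)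

lemma tsum_lin: "tsum X \<beta> = lin X (\<lambda>p. \<beta> (fst p) (snd p))"
  by (simp add: tsum_def lin_def)

lemma lin_cong: "(\<And>p. p \<in> Poly_Mapping.keys X \<Longrightarrow> \<beta> p = \<beta>' p) \<Longrightarrow> lin X \<beta> = lin X \<beta>'"
  by (simp add: lin_def)

lemma lin_hom: assumes "calg ia ib f"
  shows "f (lin X \<beta>) = lin X (\<lambda>p. f (\<beta> p))"
  by (simp add: lin_def calg_sum[OF assms] calg_basic[OF assms] calg_of_int[OF assms])

lemma lin_scale: "c * lin X \<beta> = lin X (\<lambda>p. c * \<beta> p)"
  by (simp add: lin_def sum_distrib_left algebra_simps)

definition bal2 where
  "bal2 s t \<beta> \<longleftrightarrow> (\<forall>u u' v. \<beta> (u + u') v = \<beta> u v + \<beta> u' v) \<and>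
     (\<forall>u v v'. \<beta> u (v + v') = \<beta> u v + \<beta> u v') \<and> (\<forall>u a v. \<beta> (u * t a) v = \<beta> u (s a * v))"

lemma tz2_lin: assumes "Z \<in> tz2 s t" "bal2 s t \<beta>"
  shows "lin Z (\<lambda>p. \<beta> (fst p) (snd p)) = 0"
  using assms(1) by induction (use assms(2) in \<open>simp_all add: lin_diff bal2_def\<close>)

lemma teq2_tsum: assumes "teq2 s t X Y" "bal2 s t \<beta>" shows "tsum X \<beta> = tsum Y \<beta>"
  using tz2_lin[OF assms(1)[unfolded teq2_def] assms(2)] by (simp add: tsum_lin lin_diff)

definition bal3 where
  "bal3 s t \<gamma> \<longleftrightarrow> (\<forall>u u' v w. \<gamma> (u + u') v w = \<gamma> u v w + \<gamma> u' v w) \<and>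
     (\<forall>u v v' w. \<gamma> u (v + v') w = \<gamma> u v w + \<gamma> u v' w) \<and>
     (\<forall>u v w w'. \<gamma> u v (w + w') = \<gamma> u v w + \<gamma> u v w') \<and>
     (\<forall>u a v w. \<gamma> (u * t a) v w = \<gamma> u (s a * v) w) \<and>
     (\<forall>u a v w. \<gamma> u (v * t a) w = \<gamma> u v (s a * w))"

lemma tz3_lin: assumes "Z \<in> tz3 s t" "bal3 s t \<gamma>"
  shows "lin Z (\<lambda>p. \<gamma> (fst p) (fst (snd p)) (snd (snd p))) = 0"
  using assms(1) by induction (use assms(2) in \<open>simp_all add: lin_diff bal3_def\<close>)

lemma lin_tmul2: "lin (tmul2 X Y) \<beta> = (\<Sum>p\<in>Poly_Mapping.keys X. \<Sum>q\<in>Poly_Mapping.keys Y.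
   of_int (Poly_Mapping.lookup X p) * of_int (Poly_Mapping.lookup Y q) * \<beta> (fst p * fst q, snd p * snd q))"
  by (simp add: tmul2_def lin_sum)

lemma lin_lact2: "lin (lact2 h X) \<beta> = lin X (\<lambda>p. \<beta> (h * fst p, snd p))"
  unfolding lact2_def lin_sum lin_single by (simp add: lin_def)

lemma lin_ract2: "lin (ract2 X h) \<beta> = lin X (\<lambda>p. \<beta> (fst p, snd p * h))"
  unfolding ract2_def lin_sum lin_single by (simp add: lin_def)

lemma lin_delta_left: "lin (delta_left D X) \<gamma> = lin X (\<lambda>p. lin (D (fst p)) (\<lambda>q. \<gamma> (fst q, snd q, snd p)))"
  unfolding delta_left_def lin_sum lin_single by (simp add: lin_def sum_distrib_left algebra_simps)

lemma lin_delta_right: "lin (delta_right D X) \<gamma> = lin X (\<lambda>p. lin (D (snd p)) (\<lambda>q. \<gamma> (fst p, fst q, snd q)))"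
  unfolding delta_right_def lin_sum lin_single by (simp add: lin_def sum_distrib_left algebra_simps)



locale HA =
  fixes \<iota>A :: "'k::field \<Rightarrow> 'a::comm_ring_1" and \<iota>H :: "'k \<Rightarrow> 'h::comm_ring_1"
    and s t :: "'a \<Rightarrow> 'h" and \<epsilon> :: "'h \<Rightarrow> 'a"
    and D :: "'h \<Rightarrow> ('h \<times> 'h \<Rightarrow>\<^sub>0 int)" and S :: "'h \<Rightarrow> 'h"
  assumes H: "hopf_algebroid \<iota>A \<iota>H s t \<epsilon> D S"
begin

lemma s_calg: "calg \<iota>A \<iota>H s" and t_calg: "calg \<iota>A \<iota>H t" and e_calg: "calg \<iota>H \<iota>A \<epsilon>"
  and S_calg: "calg \<iota>H \<iota>H S" and kH: "kalg \<iota>H"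
  using H by (simp_all add: hopf_algebroid_def)

lemma D1: "teq2 s t (D 1) (tpure 1 1)" and Dadd: "teq2 s t (D (u + v)) (D u + D v)"
  and Dmul: "teq2 s t (D (u * v)) (tmul2 (D u) (D v))"
  and Di: "teq2 s t (D (\<iota>H c)) (tpure (\<iota>H c) 1)"
  and Dl: "teq2 s t (D (s a * u)) (lact2 (s a) (D u))"
  and Dr: "teq2 s t (D (u * t a)) (ract2 (D u) (t a))"
  and coass: "delta_left D (D u) - delta_right D (D u) \<in> tz3 s t"
  and es: "\<epsilon> (s a * u) = a * \<epsilon> u" and et: "\<epsilon> (u * t a) = \<epsilon> u * a"
  and cl: "tsum (D u) (\<lambda>x y. s (\<epsilon> x) * y) = u"
  and cr: "tsum (D u) (\<lambda>x y. x * t (\<epsilon> y)) = u"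
  and Ss: "S (s a) = t a" and St: "S (t a) = s a" and SS: "S (S u) = u"
  and al: "tsum (D u) (\<lambda>x y. S x * y) = t (\<epsilon> u)"
  and ar: "tsum (D u) (\<lambda>x y. x * S y) = s (\<epsilon> u)"
  using H unfolding hopf_algebroid_def by (auto simp: fun_eq_iff)

lemma es1: "\<epsilon> (s a) = a" using es[of a 1] calg_basic[OF e_calg] by simp
lemma et1: "\<epsilon> (t a) = a" using et[of 1 a] calg_basic[OF e_calg] by simp

lemma tsum_tpure: "tsum (tpure a b) \<beta> = \<beta> a b"
  by (simp add: tpure_def tsum_lin)

definition comp where "comp \<phi> \<psi> \<longleftrightarrow> (\<forall>a. \<phi> (t a) = \<psi> (s a))"

lemma bal_arr:
  assumes "calg \<iota>H \<iota>R \<phi>" "calg \<iota>H \<iota>R \<psi>" "comp \<phi> \<psi>"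
  shows "bal2 s t (\<lambda>x y. \<phi> x * \<psi> y)"
  using assms unfolding bal2_def comp_def
  by (simp add: calg_basic[OF assms(1)] calg_basic[OF assms(2)] algebra_simps)

lemma gcomp_calg:
  assumes "calg \<iota>H \<iota>R \<phi>" "calg \<iota>H \<iota>R \<psi>" "comp \<phi> \<psi>"
  shows "calg \<iota>H \<iota>R (gcomp D \<psi> \<phi>)"
proof -
  note b = bal_arr[OF assms]
  note A = calg_basic[OF assms(1)] and B = calg_basic[OF assms(2)]
  have 1: "gcomp D \<psi> \<phi> 1 = 1"
    unfolding gcomp_def teq2_tsum[OF D1 b] by (simp add: tsum_tpure A B)
  have 2: "gcomp D \<psi> \<phi> (u + v) = gcomp D \<psi> \<phi> u + gcomp D \<psi> \<phi> v" for u v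
    unfolding gcomp_def teq2_tsum[OF Dadd b] by (simp add: tsum_lin lin_add)
  have 3: "gcomp D \<psi> \<phi> (u * v) = gcomp D \<psi> \<phi> u * gcomp D \<psi> \<phi> v" for u v
  proof -
    have "gcomp D \<psi> \<phi> (u * v) = tsum (tmul2 (D u) (D v)) (\<lambda>x y. \<phi> x * \<psi> y)"
      unfolding gcomp_def by (rule teq2_tsum[OF Dmul b])
    also have "\<dots> = gcomp D \<psi> \<phi> u * gcomp D \<psi> \<phi> v"
      unfolding gcomp_def tsum_lin lin_tmul2
      unfolding lin_def sum_product
      by (intro sum.cong refl) (simp add: A B mult_ac)
    finally show ?thesis .
  qed
  have 4: "gcomp D \<psi> \<phi> (\<iota>H c) = \<iota>R c" for c
    unfolding gcomp_def teq2_tsum[OF Di b] by (simp add: tsum_tpure A B)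
  show ?thesis using 1 2 3 4 by (simp add: calg_def)
qed

lemma gcomp_s:
  assumes "calg \<iota>H \<iota>R \<phi>" "calg \<iota>H \<iota>R \<psi>" "comp \<phi> \<psi>"
  shows "gcomp D \<psi> \<phi> (s a) = \<phi> (s a)"
proof -
  note b = bal_arr[OF assms]
  note A = calg_basic[OF assms(1)] and B = calg_basic[OF assms(2)]
  have "gcomp D \<psi> \<phi> (s a) = tsum (D (s a * 1)) (\<lambda>x y. \<phi> x * \<psi> y)" by (simp add: gcomp_def)
  also have "\<dots> = \<phi> (s a) * tsum (D 1) (\<lambda>x y. \<phi> x * \<psi> y)"
    unfolding teq2_tsum[OF Dl b] by (simp add: tsum_lin lin_lact2 lin_scale A algebra_simps)
  also have "\<dots> = \<phi> (s a)"
    unfolding teq2_tsum[OF D1 b] by (simp add: tsum_tpure A B)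
  finally show ?thesis .
qed

lemma gcomp_t:
  assumes "calg \<iota>H \<iota>R \<phi>" "calg \<iota>H \<iota>R \<psi>" "comp \<phi> \<psi>"
  shows "gcomp D \<psi> \<phi> (t a) = \<psi> (t a)"
proof -
  note b = bal_arr[OF assms]
  note A = calg_basic[OF assms(1)] and B = calg_basic[OF assms(2)]
  have "gcomp D \<psi> \<phi> (t a) = tsum (D (1 * t a)) (\<lambda>x y. \<phi> x * \<psi> y)" by (simp add: gcomp_def)
  also have "\<dots> = \<psi> (t a) * tsum (D 1) (\<lambda>x y. \<phi> x * \<psi> y)"
    unfolding teq2_tsum[OF Dr b] by (simp add: tsum_lin lin_ract2 lin_scale B algebra_simps)
  also have "\<dots> = \<psi> (t a)"
    unfolding teq2_tsum[OF D1 b] by (simp add: tsum_tpure A B)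
  finally show ?thesis .
qed

lemma gcomp_assoc:
  assumes "calg \<iota>H \<iota>R \<phi>" "calg \<iota>H \<iota>R \<psi>" "calg \<iota>H \<iota>R \<chi>" "comp \<phi> \<psi>" "comp \<psi> \<chi>"
  shows "gcomp D \<chi> (gcomp D \<psi> \<phi>) = gcomp D (gcomp D \<chi> \<psi>) \<phi>"
proof
  fix u
  note A = calg_basic[OF assms(1)] and B = calg_basic[OF assms(2)] and C = calg_basic[OF assms(3)]
  define \<gamma> where "\<gamma> = (\<lambda>(p::'h \<times> 'h \<times> 'h). \<phi> (fst p) * \<psi> (fst (snd p)) * \<chi> (snd (snd p)))"
  have b3: "bal3 s t (\<lambda>a b c. \<phi> a * \<psi> b * \<chi> c)"
    using assms(4,5) unfolding bal3_def comp_def by (simp add: A B C algebra_simps)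
  have "lin (delta_left D (D u) - delta_right D (D u)) \<gamma> = 0"
    using tz3_lin[OF coass b3] by (simp add: \<gamma>_def)
  then have e: "lin (delta_left D (D u)) \<gamma> = lin (delta_right D (D u)) \<gamma>" by (simp add: lin_diff)
  have "gcomp D \<chi> (gcomp D \<psi> \<phi>) u = lin (delta_left D (D u)) \<gamma>"
    by (simp add: gcomp_def tsum_lin lin_delta_left lin_scale \<gamma>_def mult.commute)
  also note e
  also have "lin (delta_right D (D u)) \<gamma> = gcomp D (gcomp D \<chi> \<psi>) \<phi> u"
    by (simp add: gcomp_def tsum_lin lin_delta_right lin_scale \<gamma>_def mult.assoc)
  finally show "gcomp D \<chi> (gcomp D \<psi> \<phi>) u = gcomp D (gcomp D \<chi> \<psi>) \<phi> u" .
qed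

lemma inv_calg: "calg \<iota>H \<iota>R g \<Longrightarrow> calg \<iota>H \<iota>R (g \<circ> S)"
  by (rule calg_comp[OF S_calg])

lemma inv_l: assumes "calg \<iota>H \<iota>R g"
  shows "gcomp D g (g \<circ> S) = g \<circ> t \<circ> \<epsilon>"
proof
  fix u
  have "gcomp D g (g \<circ> S) u = g (tsum (D u) (\<lambda>x y. S x * y))"
    by (simp add: gcomp_def tsum_lin lin_hom[OF assms] calg_basic[OF assms])
  then show "gcomp D g (g \<circ> S) u = (g \<circ> t \<circ> \<epsilon>) u" by (simp add: al)
qed

lemma inv_r: assumes "calg \<iota>H \<iota>R g"
  shows "gcomp D (g \<circ> S) g = g \<circ> s \<circ> \<epsilon>"
proof
  fix u
  have "gcomp D (g \<circ> S) g u = g (tsum (D u) (\<lambda>x y. x * S y))"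
    by (simp add: gcomp_def tsum_lin lin_hom[OF assms] calg_basic[OF assms])
  then show "gcomp D (g \<circ> S) g u = (g \<circ> s \<circ> \<epsilon>) u" by (simp add: ar)
qed

lemma unit_l: assumes "calg \<iota>H \<iota>R g"
  shows "gcomp D (g \<circ> t \<circ> \<epsilon>) g = g"
proof
  fix u
  have "gcomp D (g \<circ> t \<circ> \<epsilon>) g u = g (tsum (D u) (\<lambda>x y. x * t (\<epsilon> y)))"
    by (simp add: gcomp_def tsum_lin lin_hom[OF assms] calg_basic[OF assms])
  then show "gcomp D (g \<circ> t \<circ> \<epsilon>) g u = g u" by (simp add: cr)
qed

lemma unit_r: assumes "calg \<iota>H \<iota>R g"
  shows "gcomp D g (g \<circ> s \<circ> \<epsilon>) = g"
proof
  fix u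
  have "gcomp D g (g \<circ> s \<circ> \<epsilon>) u = g (tsum (D u) (\<lambda>x y. s (\<epsilon> x) * y))"
    by (simp add: gcomp_def tsum_lin lin_hom[OF assms] calg_basic[OF assms])
  then show "gcomp D g (g \<circ> s \<circ> \<epsilon>) u = g u" by (simp add: cl)
qed

lemma restr:
  assumes K: "sub_hopf_algebroid \<iota>H s t D S K" and k: "k \<in> K"
    and "calg \<iota>H \<iota>R \<phi>" "calg \<iota>H \<iota>R \<psi>" "comp \<phi> \<psi>"
    and "calg \<iota>H \<iota>R \<phi>'" "calg \<iota>H \<iota>R \<psi>'" "comp \<phi>' \<psi>'"
    and e1: "\<forall>x\<in>K. \<phi> x = \<phi>' x" and e2: "\<forall>x\<in>K. \<psi> x = \<psi>' x"
  shows "gcomp D \<psi> \<phi> k = gcomp D \<psi>' \<phi>' k"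
proof -
  obtain X where X: "teq2 s t (D k) X" "Poly_Mapping.keys X \<subseteq> K \<times> K"
  proof -
    have "\<forall>u\<in>K. \<exists>X. teq2 s t (D u) X \<and> Poly_Mapping.keys X \<subseteq> K \<times> K"
      using K unfolding sub_hopf_algebroid_def by (elim conjE)
    then show ?thesis using k that by blast
  qed
  have "gcomp D \<psi> \<phi> k = tsum X (\<lambda>x y. \<phi> x * \<psi> y)"
    unfolding gcomp_def by (rule teq2_tsum[OF X(1) bal_arr[OF assms(3-5)]])
  also have "\<dots> = tsum X (\<lambda>x y. \<phi>' x * \<psi>' y)"
  proof (unfold tsum_lin, rule lin_cong)
    fix p assume "p \<in> Poly_Mapping.keys X"
    then have "fst p \<in> K" "snd p \<in> K" using X(2) by (auto simp: mem_Times_iff)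
    then show "\<phi> (fst p) * \<psi> (snd p) = \<phi>' (fst p) * \<psi>' (snd p)" using e1 e2 by simp
  qed
  also have "\<dots> = gcomp D \<psi>' \<phi>' k"
    unfolding gcomp_def by (rule teq2_tsum[OF X(1) bal_arr[OF assms(6-8)], symmetric])
  finally show ?thesis .
qed

end


locale HK =
  fixes \<iota>A :: "'k::field \<Rightarrow> 'a::comm_ring_1" and \<iota>H :: "'k \<Rightarrow> 'h::comm_ring_1"
    and s t :: "'a \<Rightarrow> 'h" and \<epsilon> :: "'h \<Rightarrow> 'a"
    and D :: "'h \<Rightarrow> ('h \<times> 'h \<Rightarrow>\<^sub>0 int)" and S :: "'h \<Rightarrow> 'h"
    and \<iota>R :: "'k \<Rightarrow> 'r::comm_ring_1" and K :: "'h set"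
  assumes H': "hopf_algebroid \<iota>A \<iota>H s t \<epsilon> D S"
    and Ksub: "sub_hopf_algebroid \<iota>H s t D S K"

sublocale HK \<subseteq> HA by unfold_locales (rule H')

context HK
begin

abbreviation I where "I \<equiv> HKplus \<epsilon> K"
abbreviation \<pi> where "\<pi> \<equiv> qproj \<epsilon> K"

lemma TR: "cring (type_ring :: 'h ring)" "ring (type_ring :: 'h ring)"
  "cring (type_ring :: 'r ring)" "ring (type_ring :: 'r ring)"
  by (rule cring_type_ring cring.axioms(1)[OF cring_type_ring])+

lemma I_ideal: "ideal I (type_ring :: 'h ring)"
  unfolding HKplus_def by (rule ring.genideal_ideal[OF TR(2)]) simp

lemma pi_hom: "\<pi> \<in> ring_hom (type_ring :: 'h ring) ((type_ring :: 'h ring) Quot I)"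
  unfolding qproj_def[abs_def] by (rule ideal.rcos_ring_hom[OF I_ideal])

lemma Q_ring: "ring ((type_ring :: 'h ring) Quot I)"
  by (rule ideal.quotient_is_ring[OF I_ideal])

lemma Kall1: "\<forall>x\<in>K. \<forall>y\<in>K. x + y \<in> K \<and> x * y \<in> K"
  using Ksub by (simp add: sub_hopf_algebroid_def)
lemma Kall2: "\<forall>c. \<forall>x\<in>K. \<iota>H c * x \<in> K"
  using Ksub by (simp add: sub_hopf_algebroid_def)
lemma Kall3: "range s \<subseteq> K" "range t \<subseteq> K"
  using Ksub by (simp_all add: sub_hopf_algebroid_def)

lemma K_add: "x \<in> K \<Longrightarrow> y \<in> K \<Longrightarrow> x + y \<in> K"
  using Kall1 by blast
lemma K_s: "s a \<in> K" using Kall3(1) by (rule subsetD) simp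
lemma K_t: "t a \<in> K" using Kall3(2) by (rule subsetD) simp
lemma K_smul: "x \<in> K \<Longrightarrow> \<iota>H c * x \<in> K" using Kall2 by blast

lemma iH_m1: "\<iota>H (- 1) = - 1"
proof -
  have a: "\<And>x y. \<iota>H (x + y) = \<iota>H x + \<iota>H y" "\<iota>H 1 = 1" using kH by (simp_all add: kalg_def)
  have "\<iota>H 0 = 0" using a(1)[of 0 0] by simp
  then have "\<iota>H 1 + \<iota>H (- 1) = 0" using a(1)[of 1 "-1"] by simp
  then show ?thesis using a(2) by (metis add.inverse_unique)
qed

lemma K_neg: "x \<in> K \<Longrightarrow> - x \<in> K"
  using K_smul[of x "- 1"] iH_m1 by simp

lemma K_diff: "x \<in> K \<Longrightarrow> y \<in> K \<Longrightarrow> x - y \<in> K"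
  by (metis K_add K_neg diff_conv_add_uminus)

lemma Kplus_elt: "k \<in> K \<Longrightarrow> k - s (\<epsilon> k) \<in> I"
proof -
  assume k: "k \<in> K"
  have "k - s (\<epsilon> k) \<in> Kplus \<epsilon> K"
    using K_diff[OF k K_s] by (simp add: Kplus_def calg_basic[OF e_calg] es1)
  then show ?thesis unfolding HKplus_def using ring.genideal_self[OF TR(2)] by auto
qed

definition kerset where
  "kerset f \<longleftrightarrow> calg \<iota>H \<iota>R f \<and> (\<exists>x. calg \<iota>A \<iota>R x \<and> (\<forall>k\<in>K. f k = x (\<epsilon> k)))"

lemma P1a: assumes "qcalg \<iota>H \<iota>R \<epsilon> K h" shows "kerset (h \<circ> \<pi>)"
proof -
  have hh: "h \<in> ring_hom ((type_ring :: 'h ring) Quot I) (type_ring :: 'r ring)"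
    and hi: "\<And>c. h (\<pi> (\<iota>H c)) = \<iota>R c" using assms by (simp_all add: qcalg_def)
  have fh: "h \<circ> \<pi> \<in> ring_hom (type_ring :: 'h ring) (type_ring :: 'r ring)"
    by (rule ring_hom_trans[OF pi_hom hh])
  have f: "calg \<iota>H \<iota>R (h \<circ> \<pi>)"
    unfolding calg_def using ring_hom_add[OF fh] ring_hom_mult[OF fh] ring_hom_one[OF fh] hi
    by simp
  have z: "h (\<pi> i) = 0" if "i \<in> I" for i
  proof -
    have "\<pi> i = I" unfolding qproj_def by (rule ring.a_rcos_zero[OF TR(2) I_ideal that])
    also have "I = \<zero>\<^bsub>(type_ring :: 'h ring) Quot I\<^esub>" by (simp add: FactRing_def)
    finally show ?thesis using ring_hom_zero[OF hh Q_ring TR(4)] by simp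
  qed
  define f where "f = h \<circ> \<pi>"
  have fk: "f k = f (s (\<epsilon> k))" if "k \<in> K" for k
  proof -
    have "f k - f (s (\<epsilon> k)) = f (k - s (\<epsilon> k))"
      by (rule calg_basic(3)[OF f[folded f_def], symmetric])
    also have "\<dots> = 0" using z[OF Kplus_elt[OF that]] by (simp add: f_def)
    finally show ?thesis by simp
  qed
  have "calg \<iota>A \<iota>R (f \<circ> s)" using calg_comp[OF s_calg f[folded f_def]] .
  then have "\<exists>x. calg \<iota>A \<iota>R x \<and> (\<forall>k\<in>K. f k = x (\<epsilon> k))" using fk by auto
  then show ?thesis unfolding kerset_def using f by (simp add: f_def)
qed

lemma P1b: assumes "kerset f" shows "\<exists>h. qcalg \<iota>H \<iota>R \<epsilon> K h \<and> f = h \<circ> \<pi>"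
proof -
  obtain x where f: "calg \<iota>H \<iota>R f" and x: "calg \<iota>A \<iota>R x" and fx: "\<forall>k\<in>K. f k = x (\<epsilon> k)"
    using assms unfolding kerset_def by blast
  have fh: "f \<in> ring_hom (type_ring :: 'h ring) (type_ring :: 'r ring)" by (rule calg_ring_hom[OF f])
  have kid: "ideal (a_kernel (type_ring :: 'h ring) (type_ring :: 'r ring) f) (type_ring :: 'h ring)"
    by (rule ring_hom_ring.kernel_is_ideal[OF ring_hom_ringI2[OF TR(2) TR(4) fh]])
  have "Kplus \<epsilon> K \<subseteq> a_kernel (type_ring :: 'h ring) (type_ring :: 'r ring) f"
  proof (rule subsetI)
    fix k assume "k \<in> Kplus \<epsilon> K"
    then have "k \<in> K" "\<epsilon> k = 0" by (simp_all add: Kplus_def)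
    then have "f k = 0" using fx calg_basic(1)[OF x] by simp
    then show "k \<in> a_kernel (type_ring :: 'h ring) (type_ring :: 'r ring) f"
      by (simp add: a_kernel_def')
  qed
  then have IK: "I \<subseteq> a_kernel (type_ring :: 'h ring) (type_ring :: 'r ring) f"
    unfolding HKplus_def by (rule ring.genideal_minimal[OF TR(2) kid])
  have fI: "f i = 0" if "i \<in> I" for i
  proof -
    have "i \<in> a_kernel (type_ring :: 'h ring) (type_ring :: 'r ring) f" using IK that by (rule subsetD)
    then show ?thesis by (simp add: a_kernel_def')
  qed
  have z0: "0 \<in> I" using additive_subgroup.zero_closed[OF ideal.axioms(1)[OF I_ideal]] by simp
  have mem: "y \<in> \<pi> y" for y
    unfolding qproj_def a_r_coset_def' using z0 by (intro UN_I[of 0]) simp_all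
  have const: "f z = f y" if "z \<in> \<pi> y" for z y
  proof -
    from that have "\<exists>i\<in>I. z = i + y" unfolding qproj_def a_r_coset_def' by simp
    then obtain i where i: "i \<in> I" "z = i + y" by blast
    show ?thesis using fI[OF i(1)] calg_basic(5)[OF f, of i y] i(2) by simp
  qed
  define h where "h X = f (SOME y. y \<in> X)" for X
  have hpi: "h (\<pi> y) = f y" for y
    unfolding h_def by (rule const, rule someI, rule mem)
  have carr: "X \<in> carrier ((type_ring :: 'h ring) Quot I) \<Longrightarrow> \<exists>y. X = \<pi> y" for X
    by (auto simp: FactRing_def A_RCOSETS_def' qproj_def)
  have hh: "h \<in> ring_hom ((type_ring :: 'h ring) Quot I) (type_ring :: 'r ring)"
  proof (rule ring_hom_memI)
    fix X Y assume X: "X \<in> carrier ((type_ring :: 'h ring) Quot I)"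
      and Y: "Y \<in> carrier ((type_ring :: 'h ring) Quot I)"
    obtain x y where xy: "X = \<pi> x" "Y = \<pi> y" using carr[OF X] carr[OF Y] by blast
    show "h (X \<otimes>\<^bsub>(type_ring :: 'h ring) Quot I\<^esub> Y) = h X \<otimes>\<^bsub>type_ring\<^esub> h Y"
    proof -
      have "X \<otimes>\<^bsub>(type_ring :: 'h ring) Quot I\<^esub> Y = \<pi> (x * y)"
        using ring_hom_mult[OF pi_hom, of x y] xy by simp
      then show ?thesis using xy hpi calg_basic(6)[OF f] by simp
    qed
    show "h (X \<oplus>\<^bsub>(type_ring :: 'h ring) Quot I\<^esub> Y) = h X \<oplus>\<^bsub>type_ring\<^esub> h Y"
    proof -
      have "X \<oplus>\<^bsub>(type_ring :: 'h ring) Quot I\<^esub> Y = \<pi> (x + y)"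
        using ring_hom_add[OF pi_hom, of x y] xy by simp
      then show ?thesis using xy hpi calg_basic(5)[OF f] by simp
    qed
  next
    show "h \<one>\<^bsub>(type_ring :: 'h ring) Quot I\<^esub> = \<one>\<^bsub>type_ring\<^esub>"
      using ring_hom_one[OF pi_hom] hpi[of 1] calg_basic[OF f] by simp
  qed simp
  have "qcalg \<iota>H \<iota>R \<epsilon> K h" unfolding qcalg_def using hh hpi calg_basic[OF f] by simp
  moreover have "f = h \<circ> \<pi>" by (simp add: fun_eq_iff hpi)
  ultimately show ?thesis by blast
qed

lemma kerset_iff: "kerset f \<longleftrightarrow> (\<exists>h. qcalg \<iota>H \<iota>R \<epsilon> K h \<and> f = h \<circ> \<pi>)"
  using P1a P1b by blast

lemma kern_src: "kerset \<psi> \<Longrightarrow> k \<in> K \<Longrightarrow> \<psi> k = \<psi> (s (\<epsilon> k))"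
  unfolding kerset_def using K_s by (auto simp: es1)


lemma orbit_sub:
  assumes g: "calg \<iota>H \<iota>R g" and g': "calg \<iota>H \<iota>R g'" and agree: "\<forall>k\<in>K. g k = g' k"
  shows "orbit \<iota>H \<iota>R s t \<epsilon> D K g' \<subseteq> orbit \<iota>H \<iota>R s t \<epsilon> D K g"
proof
  fix F assume "F \<in> orbit \<iota>H \<iota>R s t \<epsilon> D K g'"
  then obtain h where F: "F = gcomp D (h \<circ> \<pi>) g'" and hq: "qcalg \<iota>H \<iota>R \<epsilon> K h"
    and hs: "h \<circ> \<pi> \<circ> s = g' \<circ> t" unfolding orbit_def by blast
  define \<psi> where "\<psi> = h \<circ> \<pi>"
  have k\<psi>: "kerset \<psi>" unfolding \<psi>_def by (rule P1a[OF hq])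
  then have \<psi>c: "calg \<iota>H \<iota>R \<psi>" by (simp add: kerset_def)
  have \<psi>s: "\<psi> (s a) = g' (t a)" for a using hs unfolding \<psi>_def fun_eq_iff by simp
  have ag: "g x = g' x" if "x \<in> K" for x using agree that by blast
  have gS: "calg \<iota>H \<iota>R (g \<circ> S)" by (rule inv_calg[OF g])
  have c1: "comp (g \<circ> S) g'" unfolding comp_def by (simp add: St ag[OF K_s])
  have c1': "comp (g \<circ> S) g" unfolding comp_def by (simp add: St)
  have c4: "comp g (g \<circ> S)" unfolding comp_def by (simp add: Ss)
  define \<theta> where "\<theta> = gcomp D g' (g \<circ> S)"
  have \<theta>c: "calg \<iota>H \<iota>R \<theta>" unfolding \<theta>_def by (rule gcomp_calg[OF gS g' c1])
  have \<theta>s: "\<theta> (s a) = g (t a)" for a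
    unfolding \<theta>_def using gcomp_s[OF gS g' c1, of a] by (simp add: Ss)
  have \<theta>t: "\<theta> (t a) = g' (t a)" for a
    unfolding \<theta>_def using gcomp_t[OF gS g' c1, of a] by simp
  have c2: "comp \<theta> \<psi>" unfolding comp_def by (simp add: \<theta>t \<psi>s)
  have c3: "comp g \<theta>" unfolding comp_def by (simp add: \<theta>s)
  define \<psi>' where "\<psi>' = gcomp D \<psi> \<theta>"
  have \<psi>'c: "calg \<iota>H \<iota>R \<psi>'" unfolding \<psi>'_def by (rule gcomp_calg[OF \<theta>c \<psi>c c2])
  have \<psi>'s: "\<psi>' (s a) = g (t a)" for a
    unfolding \<psi>'_def using gcomp_s[OF \<theta>c \<psi>c c2, of a] by (simp add: \<theta>s)
  define e where "e = g \<circ> t \<circ> \<epsilon>"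
  have ec: "calg \<iota>H \<iota>R e" unfolding e_def by (rule calg_comp[OF e_calg calg_comp[OF t_calg g]])
  have ce: "comp e e" unfolding comp_def e_def by (simp add: es1 et1)
  have ete: "e \<circ> t \<circ> \<epsilon> = e" unfolding e_def by (simp add: fun_eq_iff et1)
  have ee: "gcomp D e e = e" using unit_l[OF ec] by (simp only: ete)
  have \<theta>K: "\<theta> k = e k" if k: "k \<in> K" for k
  proof -
    have "\<theta> k = gcomp D g (g \<circ> S) k"
      unfolding \<theta>_def by (rule restr[OF Ksub k gS g' c1 gS g c1']) (use ag in auto)
    also have "\<dots> = e k" using inv_l[OF g] by (simp add: e_def)
    finally show ?thesis .
  qed
  have \<psi>K: "\<psi> k = e k" if k: "k \<in> K" for k
    using kern_src[OF k\<psi> k] \<psi>s ag[OF K_t] by (simp add: e_def)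
  have \<psi>'K: "\<psi>' k = g (t (\<epsilon> k))" if k: "k \<in> K" for k
  proof -
    have "\<psi>' k = gcomp D e e k"
      unfolding \<psi>'_def by (rule restr[OF Ksub k \<theta>c \<psi>c c2 ec ec ce]) (use \<theta>K \<psi>K in auto)
    then have "\<psi>' k = e k" by (simp add: ee)
    then show ?thesis by (simp add: e_def)
  qed
  have "kerset \<psi>'" unfolding kerset_def
    using \<psi>'c calg_comp[OF t_calg g] \<psi>'K by auto
  then obtain h' where hq': "qcalg \<iota>H \<iota>R \<epsilon> K h'" and \<psi>'h: "\<psi>' = h' \<circ> \<pi>"
    using P1b by blast
  have "gcomp D \<theta> g = gcomp D g' (gcomp D (g \<circ> S) g)"
    unfolding \<theta>_def by (rule gcomp_assoc[OF g gS g' c4 c1, symmetric])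
  also have "gcomp D (g \<circ> S) g = g' \<circ> s \<circ> \<epsilon>"
    using inv_r[OF g] ag[OF K_s] by (simp add: fun_eq_iff)
  also have "gcomp D g' (g' \<circ> s \<circ> \<epsilon>) = g'" by (rule unit_r[OF g'])
  finally have \<theta>g: "gcomp D \<theta> g = g'" .
  have "gcomp D \<psi>' g = gcomp D \<psi> (gcomp D \<theta> g)"
    unfolding \<psi>'_def by (rule gcomp_assoc[OF g \<theta>c \<psi>c c3 c2, symmetric])
  also have "\<dots> = F" by (simp add: \<theta>g F \<psi>_def)
  finally have "F = gcomp D (h' \<circ> \<pi>) g" by (simp add: \<psi>'h)
  moreover have "h' \<circ> \<pi> \<circ> s = g \<circ> t" using \<psi>'s by (simp add: fun_eq_iff \<psi>'h[symmetric])
  ultimately show "F \<in> orbit \<iota>H \<iota>R s t \<epsilon> D K g" unfolding orbit_def using hq' by blast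
qed

lemma self_orbit: assumes g: "calg \<iota>H \<iota>R g" shows "g \<in> orbit \<iota>H \<iota>R s t \<epsilon> D K g"
proof -
  define e where "e = g \<circ> t \<circ> \<epsilon>"
  have ec: "calg \<iota>H \<iota>R e" unfolding e_def by (rule calg_comp[OF e_calg calg_comp[OF t_calg g]])
  have "kerset e" unfolding kerset_def using ec calg_comp[OF t_calg g] by (auto simp: e_def)
  then obtain h where hq: "qcalg \<iota>H \<iota>R \<epsilon> K h" and eh: "e = h \<circ> \<pi>" using P1b by blast
  have "h \<circ> \<pi> \<circ> s = g \<circ> t" by (simp add: eh[symmetric] e_def fun_eq_iff es1)
  moreover have "g = gcomp D (h \<circ> \<pi>) g" using unit_l[OF g] by (simp add: eh[symmetric] e_def)
  ultimately show ?thesis unfolding orbit_def using hq by blast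
qed

lemma orbit_back:
  assumes g: "calg \<iota>H \<iota>R g" and g': "calg \<iota>H \<iota>R g'"
    and eq: "orbit \<iota>H \<iota>R s t \<epsilon> D K g = orbit \<iota>H \<iota>R s t \<epsilon> D K g'" and k: "k \<in> K"
  shows "g k = g' k"
proof -
  have "g \<in> orbit \<iota>H \<iota>R s t \<epsilon> D K g'" using self_orbit[OF g] eq by simp
  then obtain h where G: "g = gcomp D (h \<circ> \<pi>) g'" and hq: "qcalg \<iota>H \<iota>R \<epsilon> K h"
    and hs: "h \<circ> \<pi> \<circ> s = g' \<circ> t" unfolding orbit_def by blast
  define \<psi> where "\<psi> = h \<circ> \<pi>"
  have k\<psi>: "kerset \<psi>" unfolding \<psi>_def by (rule P1a[OF hq])
  then have \<psi>c: "calg \<iota>H \<iota>R \<psi>" by (simp add: kerset_def)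
  have \<psi>s: "\<psi> (s a) = g' (t a)" for a using hs unfolding \<psi>_def fun_eq_iff by simp
  have c: "comp g' \<psi>" unfolding comp_def by (simp add: \<psi>s)
  define e where "e = g' \<circ> t \<circ> \<epsilon>"
  have ec: "calg \<iota>H \<iota>R e" unfolding e_def by (rule calg_comp[OF e_calg calg_comp[OF t_calg g']])
  have c': "comp g' e" unfolding comp_def e_def by (simp add: es1)
  have \<psi>K: "\<psi> x = e x" if x: "x \<in> K" for x
    using kern_src[OF k\<psi> x] \<psi>s by (simp add: e_def)
  have "g k = gcomp D \<psi> g' k" using G by (simp add: \<psi>_def)
  also have "\<dots> = gcomp D e g' k"
    by (rule restr[OF Ksub k g' \<psi>c c g' ec c']) (use \<psi>K in auto)
  also have "\<dots> = g' k" using unit_l[OF g'] by (simp add: e_def)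
  finally show ?thesis .
qed

end

theorem proposition3p30:
  fixes \<iota>A :: "'k::field \<Rightarrow> 'a::comm_ring_1" and \<iota>H :: "'k \<Rightarrow> 'h::comm_ring_1"
    and \<iota>R :: "'k \<Rightarrow> 'r::comm_ring_1"
    and s t :: "'a \<Rightarrow> 'h" and \<epsilon> :: "'h \<Rightarrow> 'a"
    and D :: "'h \<Rightarrow> ('h \<times> 'h \<Rightarrow>\<^sub>0 int)" and S :: "'h \<Rightarrow> 'h" and K :: "'h set"
  assumes "hopf_algebroid \<iota>A \<iota>H s t \<epsilon> D S"
    and "sub_hopf_algebroid \<iota>H s t D S K"
    and "kalg \<iota>R"
  shows "{f. calg \<iota>H \<iota>R f \<and> (\<exists>x. calg \<iota>A \<iota>R x \<and> (\<forall>k\<in>K. f k = x (\<epsilon> k)))}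
           = {h \<circ> qproj \<epsilon> K | h. qcalg \<iota>H \<iota>R \<epsilon> K h}
       \<and> (\<forall>g g'. calg \<iota>H \<iota>R g \<longrightarrow> calg \<iota>H \<iota>R g' \<longrightarrow>
            ((\<forall>k\<in>K. g k = g' k) \<longleftrightarrow> orbit \<iota>H \<iota>R s t \<epsilon> D K g = orbit \<iota>H \<iota>R s t \<epsilon> D K g'))"
proof -
  interpret HK \<iota>A \<iota>H s t \<epsilon> D S \<iota>R K by unfold_locales (rule assms(1), rule assms(2))
  have P1: "{f. calg \<iota>H \<iota>R f \<and> (\<exists>x. calg \<iota>A \<iota>R x \<and> (\<forall>k\<in>K. f k = x (\<epsilon> k)))}
           = {h \<circ> qproj \<epsilon> K | h. qcalg \<iota>H \<iota>R \<epsilon> K h}"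
    using kerset_iff unfolding kerset_def by blast
  have P2: "(\<forall>k\<in>K. g k = g' k) \<longleftrightarrow> orbit \<iota>H \<iota>R s t \<epsilon> D K g = orbit \<iota>H \<iota>R s t \<epsilon> D K g'"
    if g: "calg \<iota>H \<iota>R g" and g': "calg \<iota>H \<iota>R g'" for g g'
  proof
    assume a: "\<forall>k\<in>K. g k = g' k"
    then have a': "\<forall>k\<in>K. g' k = g k" by simp
    show "orbit \<iota>H \<iota>R s t \<epsilon> D K g = orbit \<iota>H \<iota>R s t \<epsilon> D K g'"
      using orbit_sub[OF g g' a] orbit_sub[OF g' g a'] by blast
  next
    assume "orbit \<iota>H \<iota>R s t \<epsilon> D K g = orbit \<iota>H \<iota>R s t \<epsilon> D K g'"
    then show "\<forall>k\<in>K. g k = g' k" using orbit_back[OF g g'] by blast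
  qed
  show ?thesis using P1 P2 by blast
qed


end
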